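(* Let $a=(a_1,\dots,a_m)$ and $a'$ be two compositions such that the multisets $M(a)=\{a_1,\dots,a_m\}$ and $M(a')$ are equal (i.e. $a'$ is a rearrangement of $a$). Then for every $n\ge 0$, the number of compositions of size $n$ that dominate $a$ equals the number of compositions of size $n$ that dominate $a'$.
   Context: A composition is a finite sequence of positive integers; its size is the sum of its components and its length is the number of components. A composition $b=(b_1,\dots,b_k)$ dominates $a=(a_1,\dots,a_m)$ if there are indices $1\le i(1)<i(2)<\dots<i(m)\le k$ with $a_j\le b_{i(j)}$ for every $j\in[m]$. *)

theory Defs
  imports "HOL-Library.Multiset"
begin

definition is_composition :: "nat list \<Rightarrow> bool" where
  "is_composition c \<longleftrightarrow> (\<forall>x\<in>set c. 0 < x)"

definition comp_size :: "nat list \<Rightarrow> nat" where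
  "comp_size c = sum_list c"

definition dominates :: "nat list \<Rightarrow> nat list \<Rightarrow> bool" where
  "dominates b a \<longleftrightarrow>
     (\<exists>i :: nat \<Rightarrow> nat. strict_mono_on {..<length a} i \<and>
        (\<forall>j<length a. i j < length b \<and> a ! j \<le> b ! (i j)))"

definition dominating_compositions :: "nat \<Rightarrow> nat list \<Rightarrow> nat list set" where
  "dominating_compositions n a =
     {b. is_composition b \<and> comp_size b = n \<and> dominates b a}"

end

theory Submission imports Defs "HOL-Library.Sublist" begin
lemma emb_imp_dom: "list_emb (\<le>) a b \<Longrightarrow> dominates b a"
proof (induction rule: list_emb.induct)
  case (list_emb_Nil ys)
  then show ?case by (auto simp: dominates_def strict_mono_on_def)
next
  case (list_emb_Cons xs ys y)
  then obtain i where i: "strict_mono_on {..<length xs} i"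
    "\<forall>j<length xs. i j < length ys \<and> xs ! j \<le> ys ! (i j)"
    by (auto simp: dominates_def)
  show ?case unfolding dominates_def
    by (rule exI[of _ "\<lambda>j. Suc (i j)"]) (use i in \<open>auto simp: strict_mono_on_def\<close>)
next
  case (list_emb_Cons2 x y xs ys)
  then obtain i where i: "strict_mono_on {..<length xs} i"
    "\<forall>j<length xs. i j < length ys \<and> xs ! j \<le> ys ! (i j)"
    by (auto simp: dominates_def)
  show ?case unfolding dominates_def
  proof (rule exI[of _ "\<lambda>j. if j = 0 then 0 else Suc (i (j - 1))"], rule conjI)
    show "strict_mono_on {..<length (x # xs)} (\<lambda>j. if j = 0 then 0 else Suc (i (j - 1)))"
      using i(1) unfolding strict_mono_on_def
      by (auto simp: less_diff_conv2)
  next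
    show "\<forall>j<length (x # xs). (if j = 0 then 0 else Suc (i (j - 1))) < length (y # ys) \<and>
          (x # xs) ! j \<le> (y # ys) ! (if j = 0 then 0 else Suc (i (j - 1)))"
    proof (intro allI impI)
    fix j assume "j < length (x # xs)"
    then show "(if j = 0 then 0 else Suc (i (j - 1))) < length (y # ys) \<and>
          (x # xs) ! j \<le> (y # ys) ! (if j = 0 then 0 else Suc (i (j - 1)))"
      using i(2) list_emb_Cons2(1) by (cases j) auto
  qed
  qed
qed

lemma dom_imp_emb: "dominates b a \<Longrightarrow> list_emb (\<le>) a b"
proof (induction a arbitrary: b)
  case Nil
  then show ?case by simp
next
  case (Cons x a)
  then obtain i where i: "strict_mono_on {..<length (x#a)} i"
    "\<forall>j<length (x#a). i j < length b \<and> (x#a) ! j \<le> b ! (i j)"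
    by (auto simp: dominates_def)
  define k where "k = i 0"
  have k: "k < length b" "x \<le> b ! k" using i(2) unfolding k_def by auto
  have gt: "i (Suc j) > k" if "j < length a" for j
    using i(1) that unfolding k_def strict_mono_on_def by auto
  have "dominates (drop (Suc k) b) a"
    unfolding dominates_def
  proof (rule exI[of _ "\<lambda>j. i (Suc j) - Suc k"], rule conjI)
    show "strict_mono_on {..<length a} (\<lambda>j. i (Suc j) - Suc k)"
      unfolding strict_mono_on_def
    proof (intro allI impI)
      fix r s assume "r \<in> {..<length a} \<and> s \<in> {..<length a} \<and> r < s"
      then have "r \<in> {..<length a}" "s \<in> {..<length a}" "r < s" by auto
      then have "i (Suc r) < i (Suc s)" using i(1) unfolding strict_mono_on_def by auto
      then show "i (Suc r) - Suc k < i (Suc s) - Suc k"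
        using gt \<open>r \<in> _\<close> by fastforce
    qed
  next
    show "\<forall>j<length a. i (Suc j) - Suc k < length (drop (Suc k) b) \<and>
         a ! j \<le> drop (Suc k) b ! (i (Suc j) - Suc k)"
    proof (intro allI impI)
    fix j assume j: "j < length a"
    have "i (Suc j) < length b" "a ! j \<le> b ! i (Suc j)" using i(2) j by auto
    then show "i (Suc j) - Suc k < length (drop (Suc k) b) \<and>
         a ! j \<le> drop (Suc k) b ! (i (Suc j) - Suc k)"
      using gt[OF j] by auto
  qed
  qed
  then have e: "list_emb (\<le>) a (drop (Suc k) b)" using Cons.IH by blast
  have "b = take k b @ (b ! k) # drop (Suc k) b"
    using k(1) by (simp add: id_take_nth_drop)
  moreover have "list_emb (\<le>) (x # a) ((b ! k) # drop (Suc k) b)"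
    using e k(2) by auto
  ultimately show ?case by (metis list_emb_append2)
qed

lemma dom_iff: "dominates b a \<longleftrightarrow> list_emb (\<le>) a b"
  using emb_imp_dom dom_imp_emb by blast

definition PB :: "nat \<Rightarrow> nat list set" where
  "PB x = {e. e \<noteq> [] \<and> x \<le> last e \<and> (\<forall>z\<in>set (butlast e). z < x) \<and> is_composition e}"

definition DD :: "nat \<Rightarrow> nat list \<Rightarrow> nat list set" where
  "DD n a = {b. is_composition b \<and> sum_list b = n \<and> list_emb (\<le>) a b}"

lemma comp_append[simp]: "is_composition (e @ s) \<longleftrightarrow> is_composition e \<and> is_composition s"
  by (auto simp: is_composition_def)

lemma comp_Cons[simp]: "is_composition (c # s) \<longleftrightarrow> 0 < c \<and> is_composition s"
  by (auto simp: is_composition_def)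

lemma uniq:
  assumes "e \<in> PB x" "e' \<in> PB x" "e @ s = e' @ t"
  shows "e = e'"
proof -
  have key: False if "f \<in> PB x" "g \<in> PB x" "f = g @ us" "us \<noteq> []" for f g us
  proof -
    have "g \<noteq> []" using that by (auto simp: PB_def)
    have "butlast f = g @ butlast us" using that by (simp add: butlast_append)
    then have "last g \<in> set (butlast f)" using \<open>g \<noteq> []\<close> by simp
    then show False using that by (auto simp: PB_def)
  qed
  from assms(3) obtain us where "(e = e' @ us \<and> t = us @ s) \<or> (e @ us = e' \<and> s = us @ t)"
    by (auto simp: append_eq_append_conv2)
  then show ?thesis
    using key[OF assms(1,2)] key[OF assms(2,1)] by (cases "us = []") auto
qed

lemma decomp:
  assumes "list_emb (\<le>) ((x::nat) # r) b"
  shows "\<exists>e s. b = e @ s \<and> e \<noteq> [] \<and> x \<le> last e \<and> (\<forall>z\<in>set (butlast e). z < x) \<and> list_emb (\<le>) r s"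
  using assms
proof (induction b rule: list.induct)
  case Nil
  then show ?case by simp
next
  case (Cons c b)
  show ?case
  proof (cases "x \<le> c")
    case True
    then have "list_emb (\<le>) r b" using Cons.prems by simp
    then show ?thesis using True by (intro exI[of _ "[c]"] exI[of _ b]) auto
  next
    case False
    then have "list_emb (\<le>) (x # r) b" using Cons.prems by simp
    then obtain e s where es: "b = e @ s" "e \<noteq> []" "x \<le> last e" "\<forall>z\<in>set (butlast e). z < x"
      "list_emb (\<le>) r s" using Cons.IH by blast
    show ?thesis
      by (rule exI[of _ "c # e"], rule exI[of _ s]) (use es False in \<open>auto simp: not_le\<close>)
  qed
qed

lemma recomp:
  assumes "e \<in> PB x" "list_emb (\<le>) r s"
  shows "list_emb (\<le>) (x # r) (e @ s)"
proof -
  have e: "e = butlast e @ [last e]" using assms(1) by (auto simp: PB_def)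
  have "list_emb (\<le>) (x # r) ([last e] @ s)" using assms by (auto simp: PB_def)
  then have "list_emb (\<le>) (x # r) (butlast e @ [last e] @ s)" by blast
  then show ?thesis using e by (metis append_assoc)
qed

lemma len_le_sum: "is_composition e \<Longrightarrow> length e \<le> sum_list e"
  by (induction e) auto

lemma elem_le_sum: "z \<in> set e \<Longrightarrow> z \<le> sum_list (e::nat list)"
  by (induction e) auto

lemma fin_comps: "finite {e. is_composition e \<and> sum_list e \<le> n}"
proof -
  have "{e. is_composition e \<and> sum_list e \<le> n} \<subseteq> {xs. set xs \<subseteq> {..n} \<and> length xs \<le> n}"
    using len_le_sum elem_le_sum by fastforce
  then show ?thesis using finite_lists_length_le[of "{..n}" n] finite_subset by blast
qed

lemma fin_DD: "finite (DD n a)"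
  by (rule finite_subset[OF _ fin_comps[of n]]) (auto simp: DD_def)

lemma fin_A: "finite {e \<in> PB x. sum_list e \<le> n}"
  by (rule finite_subset[OF _ fin_comps[of n]]) (auto simp: PB_def)

lemma DD_cons:
  "DD n (x # r) = (\<lambda>(e, s). e @ s) ` (SIGMA e:{e \<in> PB x. sum_list e \<le> n}. DD (n - sum_list e) r)"
  (is "?L = ?R")
proof
  show "?L \<subseteq> ?R"
  proof
    fix b assume "b \<in> ?L"
    then have b: "is_composition b" "sum_list b = n" "list_emb (\<le>) (x # r) b" by (auto simp: DD_def)
    obtain e s where es: "b = e @ s" "e \<noteq> []" "x \<le> last e" "\<forall>z\<in>set (butlast e). z < x"
      "list_emb (\<le>) r s" using decomp[OF b(3)] by blast
    have "e \<in> PB x" using es b by (auto simp: PB_def)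
    moreover have "s \<in> DD (n - sum_list e) r" using es b by (auto simp: DD_def)
    ultimately show "b \<in> ?R" using es b by (auto intro!: image_eqI[of _ _ "(e, s)"])
  qed
next
  show "?R \<subseteq> ?L"
    using recomp by (auto simp: DD_def PB_def)
qed

lemma inj_app: "inj_on (\<lambda>(e, s). e @ s) (SIGMA e:{e \<in> PB x. sum_list e \<le> n}. DD (n - sum_list e) r)"
  by (auto simp: inj_on_def dest: uniq)

lemma card_DD_cons:
  "card (DD n (x # r)) = (\<Sum>e\<in>{e \<in> PB x. sum_list e \<le> n}. card (DD (n - sum_list e) r))"
  unfolding DD_cons
  by (subst card_image[OF inj_app]) (simp add: card_SigmaI fin_A fin_DD)

lemma cons_cong:
  assumes "\<And>m. card (DD m a) = card (DD m a')"
  shows "card (DD n (x # a)) = card (DD n (x # a'))"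
  unfolding card_DD_cons using assms by simp

definition QQ :: "nat \<Rightarrow> nat \<Rightarrow> nat \<Rightarrow> nat list \<Rightarrow> (nat list \<times> nat list \<times> nat list) set" where
  "QQ n x y r = {(e1, e2, s). e1 \<in> PB x \<and> e2 \<in> PB y \<and> is_composition s \<and> list_emb (\<le>) r s
      \<and> sum_list e1 + sum_list e2 + sum_list s = n}"

lemma QQ_bij: "bij_betw (\<lambda>(e1, e2, s). e1 @ e2 @ s) (QQ n x y r) (DD n (x # y # r))"
  unfolding bij_betw_def
proof
  show "inj_on (\<lambda>(e1, e2, s). e1 @ e2 @ s) (QQ n x y r)"
  proof (rule inj_onI, clarsimp simp: QQ_def)
    fix e1 e2 s f1 f2 t
    assume h: "e1 \<in> PB x" "e2 \<in> PB y" "f1 \<in> PB x" "f2 \<in> PB y" "e1 @ e2 @ s = f1 @ f2 @ t"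
    then have 1: "e1 = f1" using uniq by blast
    then have "e2 @ s = f2 @ t" using h by simp
    then have 2: "e2 = f2" using uniq h by blast
    then show "e1 = f1 \<and> e2 = f2 \<and> s = t" using 1 h by simp
  qed
next
  show "(\<lambda>(e1, e2, s). e1 @ e2 @ s) ` QQ n x y r = DD n (x # y # r)"
  proof
    show "(\<lambda>(e1, e2, s). e1 @ e2 @ s) ` QQ n x y r \<subseteq> DD n (x # y # r)"
      using recomp by (auto simp: QQ_def DD_def PB_def)
  next
    show "DD n (x # y # r) \<subseteq> (\<lambda>(e1, e2, s). e1 @ e2 @ s) ` QQ n x y r"
    proof
      fix b assume "b \<in> DD n (x # y # r)"
      then have b: "is_composition b" "sum_list b = n" "list_emb (\<le>) (x # y # r) b" by (auto simp: DD_def)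
      obtain e1 s1 where es: "b = e1 @ s1" "e1 \<noteq> []" "x \<le> last e1" "\<forall>z\<in>set (butlast e1). z < x"
        "list_emb (\<le>) (y # r) s1" using decomp[OF b(3)] by blast
      obtain e2 s where es2: "s1 = e2 @ s" "e2 \<noteq> []" "y \<le> last e2" "\<forall>z\<in>set (butlast e2). z < y"
        "list_emb (\<le>) r s" using decomp[OF es(5)] by blast
      have "(e1, e2, s) \<in> QQ n x y r" using es es2 b by (auto simp: QQ_def PB_def)
      then show "b \<in> (\<lambda>(e1, e2, s). e1 @ e2 @ s) ` QQ n x y r"
        using es es2 by (auto intro!: image_eqI[of _ _ "(e1, e2, s)"])
    qed
  qed
qed

lemma QQ_swap: "bij_betw (\<lambda>(e1, e2, s). (e2, e1, s)) (QQ n x y r) (QQ n y x r)"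
  by (rule bij_betw_byWitness[of _ "\<lambda>(e1, e2, s). (e2, e1, s)"]) (auto simp: QQ_def)

lemma swap_card: "card (DD n (x # y # r)) = card (DD n (y # x # r))"
  using bij_betw_same_card[OF QQ_bij[of n x y r]] bij_betw_same_card[OF QQ_bij[of n y x r]]
    bij_betw_same_card[OF QQ_swap[of n x y r]] by simp

lemma move: "card (DD n (z # p @ q)) = card (DD n (p @ z # q))"
proof (induction p arbitrary: n)
  case Nil
  then show ?case by simp
next
  case (Cons w p)
  have "card (DD n (z # (w # p) @ q)) = card (DD n (w # z # p @ q))"
    using swap_card by simp
  also have "\<dots> = card (DD n (w # p @ z # q))"
    by (rule cons_cong) (rule Cons.IH)
  finally show ?case by simp
qed

lemma perm_inv: "mset a = mset a' \<Longrightarrow> card (DD n a) = card (DD n a')"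
proof (induction a arbitrary: a' n)
  case Nil
  then show ?case by simp
next
  case (Cons z r)
  then have "z \<in> set a'" by (metis list.set_intros(1) set_mset_mset)
  then obtain p q where pq: "a' = p @ z # q" by (meson split_list)
  then have "mset r = mset (p @ q)" using Cons.prems by simp
  then have "\<And>m. card (DD m r) = card (DD m (p @ q))" using Cons.IH by blast
  then have "card (DD n (z # r)) = card (DD n (z # p @ q))" by (rule cons_cong)
  also have "\<dots> = card (DD n a')" using move pq by simp
  finally show ?case .
qed

theorem lemma2p3:
  fixes a a' :: "nat list" and n :: nat
  assumes "is_composition a" and "is_composition a'"
    and "mset a = mset a'"
  shows "card (dominating_compositions n a) = card (dominating_compositions n a')"
proof -
  have "\<And>a. dominating_compositions n a = DD n a"
    by (auto simp: dominating_compositions_def DD_def dom_iff comp_size_def)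
  then show ?thesis using perm_inv[OF assms(3)] by simp
qed

end
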